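(* Let $X$ be a locale with frame presentation $\mathcal{O}X = \langle G \mid R\rangle$, let $i_X\colon X \hookrightarrow \Sigma^G$ be the corresponding sublocale inclusion, and let $\mathrm{ev}\colon \Sigma^{\Sigma^G}\times\Sigma^G\to\Sigma$ be the evaluation map of the exponential $\Sigma^{\Sigma^G}$. Define $\widetilde{\mathrm{ev}} = \mathrm{ev}\circ(\Sigma^{\Sigma^G}\times i_X)\colon \Sigma^{\Sigma^G}\times X\to\Sigma$. Then $(\Sigma^{\Sigma^G},\widetilde{\mathrm{ev}})$ is a weak exponential with base $\Sigma$ and exponent $X$ in the category of locales: for every locale $A$ and every locale map $u\colon A\times X\to\Sigma$ there exists a (not necessarily unique) locale map $v\colon A\to\Sigma^{\Sigma^G}$ with $u=\widetilde{\mathrm{ev}}\circ(v\times X)$.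
   Context: A frame is a complete lattice in which finite meets distribute over arbitrary joins; a locale $X$ is formally a frame $\mathcal{O}X$ (its "opens"), and a locale map $f\colon X\to Y$ is a frame homomorphism $f^*\colon\mathcal{O}Y\to\mathcal{O}X$ (preserving finite meets and arbitrary joins). $\Sigma$ denotes the Sierpiński locale, whose frame is the free frame on one generator; locale maps $X\to\Sigma$ correspond to elements of $\mathcal{O}X$. For a set $G$, $\Sigma^G$ denotes the locale whose frame is the free frame on $G$ (the frame of downsets of the meet-semilattice of finite subsets of $G$ ordered by reverse inclusion). $\Sigma^G$ is locally compact, so the exponential $\Sigma^{\Sigma^G}$ exists in locales. A presentation $\mathcal{O}X=\langle G\mid R\rangle$ (with $R$ a set of pairs of elements of the free frame on $G$) means $\mathcal{O}X$ is the quotient of the free frame on $G$ by the frame congruence generated by $R$; the quotient homomorphism is $i_X^*$ for a sublocale inclusion $i_X\colon X\hookrightarrow\Sigma^G$. *)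

theory Defs
  imports Main
begin

record 'a frm =
  fcar :: "'a set"
  fle  :: "'a \<Rightarrow> 'a \<Rightarrow> bool"

definition is_lub :: "('a, 'b) frm_scheme \<Rightarrow> 'a set \<Rightarrow> 'a \<Rightarrow> bool" where
  "is_lub F S x \<longleftrightarrow> x \<in> fcar F \<and> (\<forall>s\<in>S. fle F s x) \<and>
     (\<forall>y\<in>fcar F. (\<forall>s\<in>S. fle F s y) \<longrightarrow> fle F x y)"

definition is_glb :: "('a, 'b) frm_scheme \<Rightarrow> 'a set \<Rightarrow> 'a \<Rightarrow> bool" where
  "is_glb F S x \<longleftrightarrow> x \<in> fcar F \<and> (\<forall>s\<in>S. fle F x s) \<and>
     (\<forall>y\<in>fcar F. (\<forall>s\<in>S. fle F y s) \<longrightarrow> fle F y x)"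

definition fsup :: "('a, 'b) frm_scheme \<Rightarrow> 'a set \<Rightarrow> 'a" where
  "fsup F S = (THE x. is_lub F S x)"

definition fmeet :: "('a, 'b) frm_scheme \<Rightarrow> 'a \<Rightarrow> 'a \<Rightarrow> 'a" where
  "fmeet F a b = (THE x. is_glb F {a, b} x)"

definition ftop :: "('a, 'b) frm_scheme \<Rightarrow> 'a" where
  "ftop F = fsup F (fcar F)"

definition is_frame :: "('a, 'b) frm_scheme \<Rightarrow> bool" where
  "is_frame F \<longleftrightarrow>
     (\<forall>a\<in>fcar F. fle F a a) \<and>
     (\<forall>a\<in>fcar F. \<forall>b\<in>fcar F. fle F a b \<and> fle F b a \<longrightarrow> a = b) \<and>
     (\<forall>a\<in>fcar F. \<forall>b\<in>fcar F. \<forall>c\<in>fcar F. fle F a b \<and> fle F b c \<longrightarrow> fle F a c) \<and>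
     (\<forall>S. S \<subseteq> fcar F \<longrightarrow> (\<exists>x. is_lub F S x)) \<and>
     (\<forall>a\<in>fcar F. \<forall>S. S \<subseteq> fcar F \<longrightarrow>
        fmeet F a (fsup F S) = fsup F ((\<lambda>s. fmeet F a s) ` S))"

definition frame_hom :: "('a, 'c) frm_scheme \<Rightarrow> ('b, 'd) frm_scheme \<Rightarrow> ('a \<Rightarrow> 'b) \<Rightarrow> bool" where
  "frame_hom F1 F2 h \<longleftrightarrow>
     (\<forall>a\<in>fcar F1. h a \<in> fcar F2) \<and>
     h (ftop F1) = ftop F2 \<and>
     (\<forall>a\<in>fcar F1. \<forall>b\<in>fcar F1. h (fmeet F1 a b) = fmeet F2 (h a) (h b)) \<and>
     (\<forall>S. S \<subseteq> fcar F1 \<longrightarrow> h (fsup F1 S) = fsup F2 (h ` S))"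

section \<open>The free frame on G, i.e. the frame of the locale Sigma^G\<close>

text \<open>Downsets of the finite subsets of G ordered by reverse inclusion,
  i.e. families of finite subsets of G closed under finite supersets.\<close>
definition free_frame_car :: "'g set \<Rightarrow> 'g set set set" where
  "free_frame_car G = {U. U \<subseteq> {F. finite F \<and> F \<subseteq> G} \<and>
      (\<forall>F\<in>U. \<forall>F'. finite F' \<and> F \<subseteq> F' \<and> F' \<subseteq> G \<longrightarrow> F' \<in> U)}"

definition free_frame :: "'g set \<Rightarrow> 'g set set frm" where
  "free_frame G = \<lparr>fcar = free_frame_car G, fle = (\<subseteq>)\<rparr>"

definition frame_congruence :: "('a, 'b) frm_scheme \<Rightarrow> ('a \<times> 'a) set \<Rightarrow> bool" where
  "frame_congruence F \<theta> \<longleftrightarrow>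
     equiv (fcar F) \<theta> \<and>
     (\<forall>a b c d. (a, b) \<in> \<theta> \<longrightarrow> (c, d) \<in> \<theta> \<longrightarrow> (fmeet F a c, fmeet F b d) \<in> \<theta>) \<and>
     (\<forall>P. P \<subseteq> \<theta> \<longrightarrow> (fsup F (fst ` P), fsup F (snd ` P)) \<in> \<theta>)"

definition gen_congruence :: "('a, 'b) frm_scheme \<Rightarrow> ('a \<times> 'a) set \<Rightarrow> ('a \<times> 'a) set" where
  "gen_congruence F R = \<Inter>{\<theta>. frame_congruence F \<theta> \<and> R \<subseteq> \<theta>}"

definition quotient_frame :: "('a, 'b) frm_scheme \<Rightarrow> ('a \<times> 'a) set \<Rightarrow> 'a set frm" where
  "quotient_frame F \<theta> = \<lparr>fcar = fcar F // \<theta>,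
     fle = (\<lambda>C D. \<exists>a b. C = \<theta> `` {a} \<and> D = \<theta> `` {b} \<and> (fmeet F a b, a) \<in> \<theta>)\<rparr>"

text \<open>O X = < G | R > and the quotient homomorphism i_X^*.\<close>
definition pres_frame :: "'g set \<Rightarrow> ('g set set \<times> 'g set set) set \<Rightarrow> 'g set set set frm" where
  "pres_frame G R = quotient_frame (free_frame G) (gen_congruence (free_frame G) R)"

definition iX :: "'g set \<Rightarrow> ('g set set \<times> 'g set set) set \<Rightarrow> 'g set set \<Rightarrow> 'g set set set" where
  "iX G R U = gen_congruence (free_frame G) R `` {U}"

section \<open>Scott topology: the frame of the exponential Sigma^Y for locally compact Y\<close>

definition directed_in :: "('a, 'b) frm_scheme \<Rightarrow> 'a set \<Rightarrow> bool" where
  "directed_in F D \<longleftrightarrow> D \<noteq> {} \<and> (\<forall>x\<in>D. \<forall>y\<in>D. \<exists>z\<in>D. fle F x z \<and> fle F y z)"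

definition scott_opens :: "('a, 'b) frm_scheme \<Rightarrow> 'a set set" where
  "scott_opens F = {S. S \<subseteq> fcar F \<and>
     (\<forall>x\<in>S. \<forall>y\<in>fcar F. fle F x y \<longrightarrow> y \<in> S) \<and>
     (\<forall>D. D \<subseteq> fcar F \<and> directed_in F D \<and> fsup F D \<in> S \<longrightarrow> (\<exists>d\<in>D. d \<in> S))}"

definition scott_frame :: "('a, 'b) frm_scheme \<Rightarrow> 'a set frm" where
  "scott_frame F = \<lparr>fcar = scott_opens F, fle = (\<subseteq>)\<rparr>"

section \<open>Products of locales: the frame coproduct O A (x) O B via C-ideals\<close>

definition is_Cideal :: "('a, 'c) frm_scheme \<Rightarrow> ('b, 'd) frm_scheme \<Rightarrow> ('a \<times> 'b) set \<Rightarrow> bool" where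
  "is_Cideal F1 F2 D \<longleftrightarrow>
     D \<subseteq> fcar F1 \<times> fcar F2 \<and>
     (\<forall>a b a' b'. (a, b) \<in> D \<and> a' \<in> fcar F1 \<and> b' \<in> fcar F2 \<and> fle F1 a' a \<and> fle F2 b' b
        \<longrightarrow> (a', b') \<in> D) \<and>
     (\<forall>a\<in>fcar F1. \<forall>S. S \<subseteq> fcar F2 \<and> {a} \<times> S \<subseteq> D \<longrightarrow> (a, fsup F2 S) \<in> D) \<and>
     (\<forall>b\<in>fcar F2. \<forall>S. S \<subseteq> fcar F1 \<and> S \<times> {b} \<subseteq> D \<longrightarrow> (fsup F1 S, b) \<in> D)"

definition tensor :: "('a, 'c) frm_scheme \<Rightarrow> ('b, 'd) frm_scheme \<Rightarrow> ('a \<times> 'b) set frm" where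
  "tensor F1 F2 = \<lparr>fcar = {D. is_Cideal F1 F2 D}, fle = (\<subseteq>)\<rparr>"

definition Cideal_closure :: "('a, 'c) frm_scheme \<Rightarrow> ('b, 'd) frm_scheme \<Rightarrow> ('a \<times> 'b) set \<Rightarrow> ('a \<times> 'b) set" where
  "Cideal_closure F1 F2 P = \<Inter>{D. is_Cideal F1 F2 D \<and> P \<subseteq> D}"

text \<open>Frame map (f x g)^* : O A (x) O B -> O A' (x) O B', determined by a (x) b |-> f a (x) g b.
  Here F1', F2' are the target frames.\<close>
definition tensor_map :: "('a2, 'c) frm_scheme \<Rightarrow> ('b2, 'd) frm_scheme \<Rightarrow>
    ('a1 \<Rightarrow> 'a2) \<Rightarrow> ('b1 \<Rightarrow> 'b2) \<Rightarrow> ('a1 \<times> 'b1) set \<Rightarrow> ('a2 \<times> 'b2) set" where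
  "tensor_map F1' F2' f g D = Cideal_closure F1' F2' ((\<lambda>(a, b). (f a, g b)) ` D)"

text \<open>ev : Sigma^(Sigma^G) x Sigma^G -> Sigma, as an element of O(Sigma^(Sigma^G) x Sigma^G):
  the C-ideal of all pairs (S, U) with S contained in the principal upset of U.\<close>
definition ev :: "'g set \<Rightarrow> ('g set set set \<times> 'g set set) set" where
  "ev G = {(S, U). S \<in> scott_opens (free_frame G) \<and> U \<in> free_frame_car G \<and> (\<forall>V\<in>S. U \<subseteq> V)}"

definition ev_tilde :: "'g set \<Rightarrow> ('g set set \<times> 'g set set) set \<Rightarrow>
    ('g set set set \<times> 'g set set set) set" where
  "ev_tilde G R = tensor_map (scott_frame (free_frame G)) (pres_frame G R) id (iX G R) (ev G)"

end

theory Submission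
  imports Defs
begin

lemma lub_unique:
  assumes "\<forall>a\<in>fcar F. \<forall>b\<in>fcar F. fle F a b \<and> fle F b a \<longrightarrow> a = b" "is_lub F S x"
  shows "fsup F S = x"
  unfolding fsup_def
  by (rule the_equality, rule assms(2)) (use assms in \<open>auto simp: is_lub_def\<close>)

lemma glb_unique:
  assumes "\<forall>a\<in>fcar F. \<forall>b\<in>fcar F. fle F a b \<and> fle F b a \<longrightarrow> a = b" "is_glb F {a,b} x"
  shows "fmeet F a b = x"
  unfolding fmeet_def
  by (rule the_equality, rule assms(2)) (use assms in \<open>auto simp: is_glb_def\<close>)

lemma ff_simps[simp]: "fcar (free_frame G) = free_frame_car G" "fle (free_frame G) = (\<subseteq>)"
  by (simp_all add: free_frame_def)

lemma ffcar_iff: "U \<in> free_frame_car G \<longleftrightarrow> (\<forall>F\<in>U. finite F \<and> F \<subseteq> G) \<and>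
      (\<forall>F\<in>U. \<forall>F'. finite F' \<and> F \<subseteq> F' \<and> F' \<subseteq> G \<longrightarrow> F' \<in> U)"
  unfolding free_frame_car_def by auto

lemma ff_Union: "W \<subseteq> free_frame_car G \<Longrightarrow> \<Union>W \<in> free_frame_car G"
  unfolding free_frame_car_def by blast

lemma ff_Int: "a \<in> free_frame_car G \<Longrightarrow> b \<in> free_frame_car G \<Longrightarrow> a \<inter> b \<in> free_frame_car G"
proof -
  assume a: "a \<in> free_frame_car G" and b: "b \<in> free_frame_car G"
  show ?thesis unfolding ffcar_iff
  proof (rule conjI)
    show "\<forall>F\<in>a \<inter> b. finite F \<and> F \<subseteq> G" using a unfolding ffcar_iff by blast
  next
    show "\<forall>F\<in>a \<inter> b. \<forall>F'. finite F' \<and> F \<subseteq> F' \<and> F' \<subseteq> G \<longrightarrow> F' \<in> a \<inter> b"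
    proof (intro ballI allI impI)
    fix F F' assume F: "F \<in> a \<inter> b" and F': "finite F' \<and> F \<subseteq> F' \<and> F' \<subseteq> G"
    have "F' \<in> a" using a F F' unfolding ffcar_iff by blast
    moreover have "F' \<in> b" using b F F' unfolding ffcar_iff by blast
    ultimately show "F' \<in> a \<inter> b" by blast
  qed
  qed
qed

lemma ff_fsup: "W \<subseteq> free_frame_car G \<Longrightarrow> fsup (free_frame G) W = \<Union>W"
  by (rule lub_unique) (auto simp: is_lub_def ff_Union)

lemma ff_fmeet: "a \<in> free_frame_car G \<Longrightarrow> b \<in> free_frame_car G \<Longrightarrow> fmeet (free_frame G) a b = a \<inter> b"
  by (rule glb_unique) (auto simp: is_glb_def ff_Int)

lemma cong_full: "frame_congruence (free_frame G) (free_frame_car G \<times> free_frame_car G)"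
proof -
  have "fsup (free_frame G) (f ` P) \<in> free_frame_car G"
    if "P \<subseteq> free_frame_car G \<times> free_frame_car G" "f = fst \<or> f = snd" for P and f :: "'a set set \<times> 'a set set \<Rightarrow> 'a set set"
  proof -
    have "f ` P \<subseteq> free_frame_car G" using that by auto
    then show ?thesis by (simp add: ff_fsup ff_Union)
  qed
  then show ?thesis unfolding frame_congruence_def
    by (auto simp: equiv_def refl_on_def sym_def trans_def ff_fmeet ff_Int)
qed

lemma cong_Inter:
  assumes "C \<noteq> {}" "\<forall>t\<in>C. frame_congruence F t"
  shows "frame_congruence F (\<Inter>C)"
proof -
  have eq: "\<forall>t\<in>C. equiv (fcar F) t" using assms(2) unfolding frame_congruence_def by blast
  have "equiv (fcar F) (\<Inter>C)"
  proof (rule equivI)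
    show "\<Inter>C \<subseteq> fcar F \<times> fcar F" using eq assms(1) unfolding equiv_def by blast
    show "refl_on (fcar F) (\<Inter>C)" using eq unfolding equiv_def refl_on_def by blast
    show "sym (\<Inter>C)" using eq unfolding equiv_def sym_def by blast
    show "trans (\<Inter>C)" using eq unfolding equiv_def trans_def by blast
  qed
  moreover have "\<forall>a b c d. (a, b) \<in> \<Inter>C \<longrightarrow> (c, d) \<in> \<Inter>C \<longrightarrow> (fmeet F a c, fmeet F b d) \<in> \<Inter>C"
    using assms unfolding frame_congruence_def by blast
  moreover have "\<forall>P. P \<subseteq> \<Inter>C \<longrightarrow> (fsup F (fst ` P), fsup F (snd ` P)) \<in> \<Inter>C"
  proof (intro allI impI)
    fix P assume P: "P \<subseteq> \<Inter>C"
    show "(fsup F (fst ` P), fsup F (snd ` P)) \<in> \<Inter>C"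
    proof
      fix t assume "t \<in> C"
      then have "frame_congruence F t" "P \<subseteq> t" using assms(2) P by auto
      then show "(fsup F (fst ` P), fsup F (snd ` P)) \<in> t" unfolding frame_congruence_def by blast
    qed
  qed
  ultimately show ?thesis unfolding frame_congruence_def by blast
qed

lemma gen_cong:
  assumes "R \<subseteq> free_frame_car G \<times> free_frame_car G"
  shows "frame_congruence (free_frame G) (gen_congruence (free_frame G) R)"
    "R \<subseteq> gen_congruence (free_frame G) R"
  unfolding gen_congruence_def
  using assms cong_full[of G] by (auto intro!: cong_Inter)


locale pres =
  fixes G :: "'g set" and R :: "('g set set \<times> 'g set set) set"
  assumes R: "R \<subseteq> free_frame_car G \<times> free_frame_car G"
begin

abbreviation "th \<equiv> gen_congruence (free_frame G) R"
abbreviation "OX \<equiv> pres_frame G R"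
abbreviation "car \<equiv> free_frame_car G"

lemma th_cong: "frame_congruence (free_frame G) th"
  using gen_cong[OF R] by blast

lemma th_equiv: "equiv car th"
  using th_cong unfolding frame_congruence_def by simp

lemma th_sub: "th \<subseteq> car \<times> car"
  using th_equiv unfolding equiv_def by blast

lemma th_refl: "a \<in> car \<Longrightarrow> (a, a) \<in> th"
  using th_equiv unfolding equiv_def refl_on_def by blast

lemma th_sym: "(a, b) \<in> th \<Longrightarrow> (b, a) \<in> th"
  using th_equiv unfolding equiv_def sym_def by blast

lemma th_trans: "(a, b) \<in> th \<Longrightarrow> (b, c) \<in> th \<Longrightarrow> (a, c) \<in> th"
  using th_equiv unfolding equiv_def trans_def by blast

lemma th_meet: "(a, b) \<in> th \<Longrightarrow> (c, d) \<in> th \<Longrightarrow> (a \<inter> c, b \<inter> d) \<in> th"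
proof -
  assume h: "(a, b) \<in> th" "(c, d) \<in> th"
  then have "a \<in> car" "b \<in> car" "c \<in> car" "d \<in> car" using th_sub by auto
  moreover have "(fmeet (free_frame G) a c, fmeet (free_frame G) b d) \<in> th"
    using th_cong h unfolding frame_congruence_def by blast
  ultimately show ?thesis by (simp add: ff_fmeet)
qed

lemma th_sup: "P \<subseteq> th \<Longrightarrow> (\<Union>(fst ` P), \<Union>(snd ` P)) \<in> th"
proof -
  assume h: "P \<subseteq> th"
  then have "fst ` P \<subseteq> car" "snd ` P \<subseteq> car" using th_sub by auto
  moreover have "(fsup (free_frame G) (fst ` P), fsup (free_frame G) (snd ` P)) \<in> th"
    using th_cong h unfolding frame_congruence_def by blast
  ultimately show ?thesis by (simp add: ff_fsup)
qed

lemma OX_car: "fcar OX = car // th"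
  by (simp add: pres_frame_def quotient_frame_def)

lemma OX_fle: "fle OX C D \<longleftrightarrow> (\<exists>a b. C = th `` {a} \<and> D = th `` {b} \<and> (fmeet (free_frame G) a b, a) \<in> th)"
  by (simp add: pres_frame_def quotient_frame_def)

lemma iX_car: "W \<in> car \<Longrightarrow> iX G R W \<in> fcar OX"
  by (simp add: OX_car iX_def quotientI)

lemma OX_elem: "C \<in> fcar OX \<Longrightarrow> \<exists>W\<in>car. C = iX G R W"
  by (auto simp: OX_car iX_def elim!: quotientE)

lemma iX_eq: "a \<in> car \<Longrightarrow> b \<in> car \<Longrightarrow> iX G R a = iX G R b \<longleftrightarrow> (a, b) \<in> th"
  unfolding iX_def using th_equiv by (rule eq_equiv_class_iff)

lemma class_car: "th `` {a} = th `` {W} \<Longrightarrow> W \<in> car \<Longrightarrow> a \<in> car \<and> (a, W) \<in> th"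
proof -
  assume h: "th `` {a} = th `` {W}" "W \<in> car"
  then have "W \<in> th `` {a}" using th_refl by auto
  then have "(a, W) \<in> th" by auto
  then show ?thesis using th_sub by auto
qed

lemma OX_le: assumes "a \<in> car" "b \<in> car"
  shows "fle OX (iX G R a) (iX G R b) \<longleftrightarrow> (a \<inter> b, a) \<in> th"
proof
  assume "(a \<inter> b, a) \<in> th"
  then have "th `` {a} = th `` {a} \<and> th `` {b} = th `` {b} \<and> (fmeet (free_frame G) a b, a) \<in> th"
    using assms by (simp add: ff_fmeet)
  then show "fle OX (iX G R a) (iX G R b)"
    unfolding OX_fle iX_def by blast
next
  assume "fle OX (iX G R a) (iX G R b)"
  then obtain a' b' where h: "th `` {a} = th `` {a'}" "th `` {b} = th `` {b'}"
    "(fmeet (free_frame G) a' b', a') \<in> th"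
    unfolding OX_fle iX_def by blast
  have a': "a' \<in> car" "(a', a) \<in> th" using class_car[OF h(1)[symmetric] assms(1)] by auto
  have b': "b' \<in> car" "(b', b) \<in> th" using class_car[OF h(2)[symmetric] assms(2)] by auto
  have "(a' \<inter> b', a') \<in> th" using h(3) a' b' by (simp add: ff_fmeet)
  moreover have "(a \<inter> b, a' \<inter> b') \<in> th" using th_meet[OF th_sym[OF a'(2)] th_sym[OF b'(2)]] .
  ultimately show "(a \<inter> b, a) \<in> th" using a'(2) th_trans by blast
qed

lemma OX_mono: "a \<in> car \<Longrightarrow> b \<in> car \<Longrightarrow> a \<subseteq> b \<Longrightarrow> fle OX (iX G R a) (iX G R b)"
  by (simp add: OX_le Int_absorb2 th_refl inf.absorb1)

lemma OX_antisym: "\<forall>C\<in>fcar OX. \<forall>D\<in>fcar OX. fle OX C D \<and> fle OX D C \<longrightarrow> C = D"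
proof (intro ballI impI)
  fix C D assume "C \<in> fcar OX" "D \<in> fcar OX" and le: "fle OX C D \<and> fle OX D C"
  then obtain a b where ab: "a \<in> car" "b \<in> car" "C = iX G R a" "D = iX G R b"
    using OX_elem by blast
  have "(a \<inter> b, a) \<in> th" "(b \<inter> a, b) \<in> th" using le ab OX_le by auto
  then have "(a, b) \<in> th" by (metis inf_commute th_sym th_trans)
  then show "C = D" using ab iX_eq by simp
qed

lemma OX_lub: assumes "W \<subseteq> car" shows "is_lub OX (iX G R ` W) (iX G R (\<Union>W))"
  unfolding is_lub_def
proof (intro conjI ballI impI)
  have U: "\<Union>W \<in> car" using assms by (rule ff_Union)
  show "iX G R (\<Union>W) \<in> fcar OX" using U by (rule iX_car)
  show "fle OX s (iX G R (\<Union> W))" if "s \<in> iX G R ` W" for s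
    using that assms U OX_mono by blast
  fix y assume y: "y \<in> fcar OX" and ub: "\<forall>s\<in>iX G R ` W. fle OX s y"
  then obtain b where b: "b \<in> car" "y = iX G R b" using OX_elem by blast
  have P: "(\<lambda>V. (V \<inter> b, V)) ` W \<subseteq> th"
  proof
    fix p assume "p \<in> (\<lambda>V. (V \<inter> b, V)) ` W"
    then obtain V where "V \<in> W" "p = (V \<inter> b, V)" by blast
    then show "p \<in> th" using ub b assms OX_le by blast
  qed
  have "(\<Union>(fst ` (\<lambda>V. (V \<inter> b, V)) ` W), \<Union>(snd ` (\<lambda>V. (V \<inter> b, V)) ` W)) \<in> th"
    using th_sup[OF P] .
  moreover have "\<Union>(fst ` (\<lambda>V. (V \<inter> b, V)) ` W) = \<Union>W \<inter> b" by auto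
  moreover have "\<Union>(snd ` (\<lambda>V. (V \<inter> b, V)) ` W) = \<Union>W" by auto
  ultimately have "(\<Union>W \<inter> b, \<Union>W) \<in> th" by simp
  then show "fle OX (iX G R (\<Union> W)) y" using OX_le U b by simp
qed

lemma OX_fsup: "W \<subseteq> car \<Longrightarrow> fsup OX (iX G R ` W) = iX G R (\<Union>W)"
  using lub_unique[OF OX_antisym OX_lub] by blast

lemma OX_fsup_car: assumes "T \<subseteq> fcar OX" shows "fsup OX T \<in> fcar OX"
proof -
  have "T = iX G R ` {W \<in> car. iX G R W \<in> T}"
    using assms OX_elem by blast
  then have "fsup OX T = iX G R (\<Union>{W \<in> car. iX G R W \<in> T})"
    using OX_fsup[of "{W \<in> car. iX G R W \<in> T}"] by auto
  then show ?thesis using iX_car ff_Union[of "{W \<in> car. iX G R W \<in> T}"] by auto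
qed

end

locale frm =
  fixes A :: "('a, 'b) frm_scheme"
  assumes fr: "is_frame A"
begin

lemma P1: "\<forall>a\<in>fcar A. fle A a a" using fr[unfolded is_frame_def] by (rule conjunct1)
lemma P2: "\<forall>a\<in>fcar A. \<forall>b\<in>fcar A. fle A a b \<and> fle A b a \<longrightarrow> a = b"
  using fr[unfolded is_frame_def] by (elim conjE)
lemma P3: "\<forall>a\<in>fcar A. \<forall>b\<in>fcar A. \<forall>c\<in>fcar A. fle A a b \<and> fle A b c \<longrightarrow> fle A a c"
  using fr[unfolded is_frame_def] by (elim conjE)
lemma P4: "\<forall>S. S \<subseteq> fcar A \<longrightarrow> (\<exists>x. is_lub A S x)"
  using fr[unfolded is_frame_def] by (elim conjE)
lemma P5: "\<forall>a\<in>fcar A. \<forall>S. S \<subseteq> fcar A \<longrightarrow>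
        fmeet A a (fsup A S) = fsup A ((\<lambda>s. fmeet A a s) ` S)"
  using fr[unfolded is_frame_def] by (elim conjE)

lemma refl: "a \<in> fcar A \<Longrightarrow> fle A a a"
  using P1 by blast

lemma antisym: "\<forall>a\<in>fcar A. \<forall>b\<in>fcar A. fle A a b \<and> fle A b a \<longrightarrow> a = b"
  by (rule P2)

lemma antisym': "a \<in> fcar A \<Longrightarrow> b \<in> fcar A \<Longrightarrow> fle A a b \<Longrightarrow> fle A b a \<Longrightarrow> a = b"
  using antisym by blast

lemma trans: "a \<in> fcar A \<Longrightarrow> b \<in> fcar A \<Longrightarrow> c \<in> fcar A \<Longrightarrow> fle A a b \<Longrightarrow> fle A b c \<Longrightarrow> fle A a c"
  using P3 by blast

lemma lub: "S \<subseteq> fcar A \<Longrightarrow> is_lub A S (fsup A S)"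
proof -
  assume "S \<subseteq> fcar A"
  then obtain x where "is_lub A S x" using P4 by blast
  then show ?thesis using lub_unique[OF antisym] by simp
qed

lemma sup_car: "S \<subseteq> fcar A \<Longrightarrow> fsup A S \<in> fcar A"
  using lub unfolding is_lub_def by blast

lemma sup_ub: "S \<subseteq> fcar A \<Longrightarrow> s \<in> S \<Longrightarrow> fle A s (fsup A S)"
  using lub unfolding is_lub_def by blast

lemma sup_least: "S \<subseteq> fcar A \<Longrightarrow> y \<in> fcar A \<Longrightarrow> (\<And>s. s \<in> S \<Longrightarrow> fle A s y) \<Longrightarrow> fle A (fsup A S) y"
  using lub unfolding is_lub_def by blast

lemma sup_mono: "S' \<subseteq> fcar A \<Longrightarrow> S \<subseteq> S' \<Longrightarrow> fle A (fsup A S) (fsup A S')"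
  by (rule sup_least) (auto intro: sup_car sup_ub)

lemma glb: assumes "a \<in> fcar A" "b \<in> fcar A" shows "is_glb A {a, b} (fmeet A a b)"
proof -
  let ?L = "{c \<in> fcar A. fle A c a \<and> fle A c b}"
  have L: "?L \<subseteq> fcar A" by blast
  have "is_glb A {a, b} (fsup A ?L)"
    unfolding is_glb_def
  proof (intro conjI ballI impI)
    show "fsup A ?L \<in> fcar A" using L by (rule sup_car)
    fix s assume "s \<in> {a, b}"
    then show "fle A (fsup A ?L) s"
      using assms by (auto intro!: sup_least)
  next
    fix y assume "y \<in> fcar A" "\<forall>s\<in>{a, b}. fle A y s"
    then show "fle A y (fsup A ?L)" by (intro sup_ub) auto
  qed
  then show ?thesis using glb_unique[OF antisym] by simp
qed

lemma meet_car: "a \<in> fcar A \<Longrightarrow> b \<in> fcar A \<Longrightarrow> fmeet A a b \<in> fcar A"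
  using glb unfolding is_glb_def by blast

lemma meet_le1: "a \<in> fcar A \<Longrightarrow> b \<in> fcar A \<Longrightarrow> fle A (fmeet A a b) a"
  using glb unfolding is_glb_def by blast

lemma meet_le2: "a \<in> fcar A \<Longrightarrow> b \<in> fcar A \<Longrightarrow> fle A (fmeet A a b) b"
  using glb unfolding is_glb_def by blast

lemma meet_greatest: "a \<in> fcar A \<Longrightarrow> b \<in> fcar A \<Longrightarrow> y \<in> fcar A \<Longrightarrow> fle A y a \<Longrightarrow> fle A y b \<Longrightarrow> fle A y (fmeet A a b)"
  using glb unfolding is_glb_def by blast

lemma meet_comm: "fmeet A a b = fmeet A b a"
  unfolding fmeet_def by (simp add: insert_commute)

lemma distrib: "a \<in> fcar A \<Longrightarrow> S \<subseteq> fcar A \<Longrightarrow> fmeet A a (fsup A S) = fsup A ((\<lambda>s. fmeet A a s) ` S)"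
  using P5 by blast

lemma sup_UN: assumes "\<And>i. i \<in> I \<Longrightarrow> X i \<subseteq> fcar A"
  shows "fsup A (\<Union>i\<in>I. X i) = fsup A ((\<lambda>i. fsup A (X i)) ` I)"
proof (rule antisym')
  have U: "(\<Union>i\<in>I. X i) \<subseteq> fcar A" using assms by blast
  have V: "(\<lambda>i. fsup A (X i)) ` I \<subseteq> fcar A" using assms sup_car by blast
  show "fsup A (\<Union>i\<in>I. X i) \<in> fcar A" using U by (rule sup_car)
  show "fsup A ((\<lambda>i. fsup A (X i)) ` I) \<in> fcar A" using V by (rule sup_car)
  show "fle A (fsup A (\<Union>i\<in>I. X i)) (fsup A ((\<lambda>i. fsup A (X i)) ` I))"
  proof (rule sup_least[OF U sup_car[OF V]])
    fix s assume "s \<in> (\<Union>i\<in>I. X i)"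
    then obtain i where i: "i \<in> I" "s \<in> X i" by blast
    have "fle A s (fsup A (X i))" using sup_ub[OF assms[OF i(1)] i(2)] .
    moreover have "fle A (fsup A (X i)) (fsup A ((\<lambda>i. fsup A (X i)) ` I))"
      using sup_ub[OF V] i(1) by blast
    ultimately show "fle A s (fsup A ((\<lambda>i. fsup A (X i)) ` I))"
      using trans[OF _ sup_car[OF assms[OF i(1)]] sup_car[OF V]] i assms by blast
  qed
  show "fle A (fsup A ((\<lambda>i. fsup A (X i)) ` I)) (fsup A (\<Union>i\<in>I. X i))"
  proof (rule sup_least[OF V sup_car[OF U]])
    fix s assume "s \<in> (\<lambda>i. fsup A (X i)) ` I"
    then obtain i where i: "i \<in> I" "s = fsup A (X i)" by blast
    show "fle A s (fsup A (\<Union>i\<in>I. X i))" unfolding i(2)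
      by (rule sup_mono[OF U]) (use i in blast)
  qed
qed

end

lemma scott_simps[simp]: "fcar (scott_frame F) = scott_opens F" "fle (scott_frame F) = (\<subseteq>)"
  by (simp_all add: scott_frame_def)

lemma so_iff: "S \<in> scott_opens F \<longleftrightarrow> S \<subseteq> fcar F \<and>
     (\<forall>x\<in>S. \<forall>y\<in>fcar F. fle F x y \<longrightarrow> y \<in> S) \<and>
     (\<forall>D. D \<subseteq> fcar F \<and> directed_in F D \<and> fsup F D \<in> S \<longrightarrow> (\<exists>d\<in>D. d \<in> S))"
  unfolding scott_opens_def by blast

lemma soD1: "S \<in> scott_opens F \<Longrightarrow> S \<subseteq> fcar F"
  unfolding scott_opens_def by simp
lemma soD2: "S \<in> scott_opens F \<Longrightarrow> x \<in> S \<Longrightarrow> y \<in> fcar F \<Longrightarrow> fle F x y \<Longrightarrow> y \<in> S"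
  unfolding scott_opens_def by simp
lemma soD3: "S \<in> scott_opens F \<Longrightarrow> D \<subseteq> fcar F \<Longrightarrow> directed_in F D \<Longrightarrow> fsup F D \<in> S \<Longrightarrow> \<exists>d\<in>D. d \<in> S"
  unfolding scott_opens_def by simp

lemma so_Union: assumes "T \<subseteq> scott_opens F" shows "\<Union>T \<in> scott_opens F"
  unfolding so_iff
proof (intro conjI allI ballI impI)
  show "\<Union>T \<subseteq> fcar F" using assms soD1 by blast
next
  fix x y assume "x \<in> \<Union>T" "y \<in> fcar F" "fle F x y"
  then obtain S where "S \<in> T" "x \<in> S" by blast
  then have "y \<in> S" using assms \<open>y \<in> fcar F\<close> \<open>fle F x y\<close> soD2[of S F x y] by blast
  then show "y \<in> \<Union>T" using \<open>S \<in> T\<close> by blast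
next
  fix D assume D: "D \<subseteq> fcar F \<and> directed_in F D \<and> fsup F D \<in> \<Union>T"
  then obtain S where S: "S \<in> T" "fsup F D \<in> S" by blast
  then have "\<exists>d\<in>D. d \<in> S" using assms D soD3 by blast
  then show "\<exists>d\<in>D. d \<in> \<Union>T" using S by blast
qed

lemma so_Int: assumes "S \<in> scott_opens F" "S' \<in> scott_opens F" shows "S \<inter> S' \<in> scott_opens F"
  unfolding so_iff
proof (intro conjI allI ballI impI)
  show "S \<inter> S' \<subseteq> fcar F" using assms soD1 by blast
next
  fix x y assume "x \<in> S \<inter> S'" "y \<in> fcar F" "fle F x y"
  then show "y \<in> S \<inter> S'" using assms soD2[of S F x y] soD2[of S' F x y] by blast
next
  fix D assume D: "D \<subseteq> fcar F \<and> directed_in F D \<and> fsup F D \<in> S \<inter> S'"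
  then obtain d1 d2 where d: "d1 \<in> D" "d1 \<in> S" "d2 \<in> D" "d2 \<in> S'" using assms soD3 by (metis IntD1 IntD2)
  then obtain z where z: "z \<in> D" "fle F d1 z" "fle F d2 z" using D unfolding directed_in_def by blast
  have "z \<in> fcar F" using z D by blast
  then have "z \<in> S" "z \<in> S'" using z d assms soD2[of S F d1 z] soD2[of S' F d2 z] by blast+
  then show "\<exists>d\<in>D. d \<in> S \<inter> S'" using z by blast
qed

lemma so_car: "fcar F \<in> scott_opens F"
  unfolding so_iff unfolding directed_in_def by blast

lemma scott_fsup: "T \<subseteq> scott_opens F \<Longrightarrow> fsup (scott_frame F) T = \<Union>T"
  by (rule lub_unique) (auto simp: is_lub_def so_Union)

lemma scott_fmeet: "S \<in> scott_opens F \<Longrightarrow> S' \<in> scott_opens F \<Longrightarrow> fmeet (scott_frame F) S S' = S \<inter> S'"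
  by (rule glb_unique) (auto simp: is_glb_def so_Int)

lemma scott_top: "ftop (scott_frame F) = fcar F"
proof -
  have "\<Union>(scott_opens F) = fcar F" using so_car[of F] soD1 by blast
  then show ?thesis unfolding ftop_def by (simp add: scott_fsup)
qed


lemma ciD1: "is_Cideal F1 F2 D \<Longrightarrow> D \<subseteq> fcar F1 \<times> fcar F2"
  unfolding is_Cideal_def by (elim conjE)
lemma ciD2: assumes "is_Cideal F1 F2 D" "(a, b) \<in> D" "a' \<in> fcar F1" "b' \<in> fcar F2"
   "fle F1 a' a" "fle F2 b' b" shows "(a', b') \<in> D"
proof -
  have H: "\<forall>a b a' b'. (a, b) \<in> D \<and> a' \<in> fcar F1 \<and> b' \<in> fcar F2 \<and> fle F1 a' a \<and> fle F2 b' b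
        \<longrightarrow> (a', b') \<in> D" using assms(1) unfolding is_Cideal_def by (elim conjE)
  show ?thesis using H[rule_format, of a b a' b'] assms by simp
qed
lemma ciD3: assumes "is_Cideal F1 F2 D" "a \<in> fcar F1" "S \<subseteq> fcar F2" "{a} \<times> S \<subseteq> D" shows "(a, fsup F2 S) \<in> D"
proof -
  have H: "\<forall>a\<in>fcar F1. \<forall>S. S \<subseteq> fcar F2 \<and> {a} \<times> S \<subseteq> D \<longrightarrow> (a, fsup F2 S) \<in> D"
    using assms(1) unfolding is_Cideal_def by (elim conjE)
  show ?thesis using H assms(2-) by simp
qed
lemma ciD4: assumes "is_Cideal F1 F2 D" "b \<in> fcar F2" "S \<subseteq> fcar F1" "S \<times> {b} \<subseteq> D" shows "(fsup F1 S, b) \<in> D"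
proof -
  have H: "\<forall>b\<in>fcar F2. \<forall>S. S \<subseteq> fcar F1 \<and> S \<times> {b} \<subseteq> D \<longrightarrow> (fsup F1 S, b) \<in> D"
    using assms(1) unfolding is_Cideal_def by (elim conjE)
  show ?thesis using H assms(2-) by simp
qed

lemma ciI:
  assumes "D \<subseteq> fcar F1 \<times> fcar F2"
    "\<And>a b a' b'. (a, b) \<in> D \<Longrightarrow> a' \<in> fcar F1 \<Longrightarrow> b' \<in> fcar F2 \<Longrightarrow> fle F1 a' a \<Longrightarrow> fle F2 b' b \<Longrightarrow> (a', b') \<in> D"
    "\<And>a S. a \<in> fcar F1 \<Longrightarrow> S \<subseteq> fcar F2 \<Longrightarrow> {a} \<times> S \<subseteq> D \<Longrightarrow> (a, fsup F2 S) \<in> D"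
    "\<And>b S. b \<in> fcar F2 \<Longrightarrow> S \<subseteq> fcar F1 \<Longrightarrow> S \<times> {b} \<subseteq> D \<Longrightarrow> (fsup F1 S, b) \<in> D"
  shows "is_Cideal F1 F2 D"
  unfolding is_Cideal_def
  apply (intro conjI)
     apply (rule assms(1))
    apply (intro allI impI; elim conjE; rule assms(2); assumption)
   apply (intro allI ballI impI; elim conjE; rule assms(3); assumption)
  apply (intro allI ballI impI; elim conjE; rule assms(4); assumption)
  done

lemma cl_sub: "is_Cideal F1 F2 D \<Longrightarrow> P \<subseteq> D \<Longrightarrow> Cideal_closure F1 F2 P \<subseteq> D"
  unfolding Cideal_closure_def by blast

lemma cl_incl: "P \<subseteq> Cideal_closure F1 F2 P"
  unfolding Cideal_closure_def by blast

lemma cl_ideal: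
  assumes full: "is_Cideal F1 F2 (fcar F1 \<times> fcar F2)" and P: "P \<subseteq> fcar F1 \<times> fcar F2"
  shows "is_Cideal F1 F2 (Cideal_closure F1 F2 P)"
proof -
  let ?C = "{D. is_Cideal F1 F2 D \<and> P \<subseteq> D}"
  have ne: "fcar F1 \<times> fcar F2 \<in> ?C" using full P by blast
  show ?thesis unfolding Cideal_closure_def
  proof (rule ciI)
    show "\<Inter>?C \<subseteq> fcar F1 \<times> fcar F2" using ne by blast
  next
    fix a b a' b' assume h: "(a, b) \<in> \<Inter>?C" "a' \<in> fcar F1" "b' \<in> fcar F2" "fle F1 a' a" "fle F2 b' b"
    show "(a', b') \<in> \<Inter>?C"
    proof
      fix D assume "D \<in> ?C"
      then show "(a', b') \<in> D" using h ciD2[of F1 F2 D a b a' b'] by blast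
    qed
  next
    fix a S assume h: "a \<in> fcar F1" "S \<subseteq> fcar F2" "{a} \<times> S \<subseteq> \<Inter>?C"
    show "(a, fsup F2 S) \<in> \<Inter>?C"
    proof
      fix D assume "D \<in> ?C"
      then show "(a, fsup F2 S) \<in> D" using h ciD3[of F1 F2 D a S] by blast
    qed
  next
    fix b S assume h: "b \<in> fcar F2" "S \<subseteq> fcar F1" "S \<times> {b} \<subseteq> \<Inter>?C"
    show "(fsup F1 S, b) \<in> \<Inter>?C"
    proof
      fix D assume "D \<in> ?C"
      then show "(fsup F1 S, b) \<in> D" using h ciD4[of F1 F2 D b S] by blast
    qed
  qed
qed

lemma full_ideal:
  assumes "\<And>S. S \<subseteq> fcar F1 \<Longrightarrow> fsup F1 S \<in> fcar F1" "\<And>S. S \<subseteq> fcar F2 \<Longrightarrow> fsup F2 S \<in> fcar F2"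
  shows "is_Cideal F1 F2 (fcar F1 \<times> fcar F2)"
  by (rule ciI) (use assms in auto)

locale main = pres G R + frm A for G :: "'g set" and R and A :: "('a, 'b) frm_scheme" +
  fixes u :: "('a \<times> 'g set set set) set"
  assumes u: "is_Cideal A (pres_frame G R) u"
begin

definition upF :: "'g set \<Rightarrow> 'g set set" where
  "upF F = {F'. finite F' \<and> F \<subseteq> F' \<and> F' \<subseteq> G}"

definition phi :: "'g set \<Rightarrow> 'a" where
  "phi F = fsup A {b \<in> fcar A. (b, iX G R (upF F)) \<in> u}"

definition Ua :: "'a \<Rightarrow> 'g set set" where
  "Ua a = {F. finite F \<and> F \<subseteq> G \<and> fle A a (phi F)}"

definition v :: "'g set set set \<Rightarrow> 'a" where
  "v S = fsup A {a \<in> fcar A. Ua a \<in> S}"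

definition SF :: "'g set \<Rightarrow> 'g set set set" where
  "SF F = {V \<in> car. F \<in> V}"

lemma upF_car: "upF F \<in> car"
  unfolding ffcar_iff upF_def by auto

lemma upF_mono: "F \<subseteq> F' \<Longrightarrow> upF F' \<subseteq> upF F"
  unfolding upF_def by auto

lemma W_decomp: assumes "W \<in> car" shows "W = \<Union>(upF ` W)"
proof
  show "W \<subseteq> \<Union>(upF ` W)"
  proof
    fix F assume "F \<in> W"
    moreover then have "F \<in> upF F" using assms unfolding ffcar_iff upF_def by blast
    ultimately show "F \<in> \<Union>(upF ` W)" by blast
  qed
  show "\<Union>(upF ` W) \<subseteq> W"
  proof
    fix F' assume "F' \<in> \<Union>(upF ` W)"
    then obtain F where "F \<in> W" "finite F' \<and> F \<subseteq> F' \<and> F' \<subseteq> G" unfolding upF_def by blast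
    then show "F' \<in> W" using assms unfolding ffcar_iff by blast
  qed
qed

lemma upF_img: "upF ` W \<subseteq> car"
  using upF_car by blast

lemma iX_W: "W \<in> car \<Longrightarrow> fsup OX (iX G R ` upF ` W) = iX G R W"
  using OX_fsup[OF upF_img[of W]] W_decomp by simp

lemma Xsub: "{b \<in> fcar A. P b} \<subseteq> fcar A" by blast

lemma phi_car: "phi F \<in> fcar A"
  unfolding phi_def by (rule sup_car[OF Xsub])

lemma phi_in: "(phi F, iX G R (upF F)) \<in> u"
  unfolding phi_def
  by (rule ciD4[OF u iX_car[OF upF_car] Xsub]) blast

lemma phi_ge: "a \<in> fcar A \<Longrightarrow> (a, iX G R (upF F)) \<in> u \<Longrightarrow> fle A a (phi F)"
  unfolding phi_def by (rule sup_ub[OF Xsub]) blast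

lemma OX_refl: "W \<in> car \<Longrightarrow> fle OX (iX G R W) (iX G R W)"
  by (rule OX_mono) auto

lemma phi_mono: assumes "F \<subseteq> F'" shows "fle A (phi F) (phi F')"
  unfolding phi_def
proof (rule sup_mono[OF Xsub])
  show "{b \<in> fcar A. (b, iX G R (upF F)) \<in> u} \<subseteq> {b \<in> fcar A. (b, iX G R (upF F')) \<in> u}"
  proof
    fix b assume b: "b \<in> {b \<in> fcar A. (b, iX G R (upF F)) \<in> u}"
    have "fle OX (iX G R (upF F')) (iX G R (upF F))"
      by (rule OX_mono[OF upF_car upF_car upF_mono[OF assms]])
    then have "(b, iX G R (upF F')) \<in> u"
      using ciD2[OF u, of b "iX G R (upF F)" b "iX G R (upF F')"] b refl iX_car[OF upF_car] by blast
    then show "b \<in> {b \<in> fcar A. (b, iX G R (upF F')) \<in> u}" using b by blast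
  qed
qed

lemma Ua_car: assumes "a \<in> fcar A" shows "Ua a \<in> car"
  unfolding ffcar_iff
proof (rule conjI)
  show "\<forall>F\<in>Ua a. finite F \<and> F \<subseteq> G" unfolding Ua_def by blast
  show "\<forall>F\<in>Ua a. \<forall>F'. finite F' \<and> F \<subseteq> F' \<and> F' \<subseteq> G \<longrightarrow> F' \<in> Ua a"
  proof (intro ballI allI impI)
    fix F F' assume F: "F \<in> Ua a" and F': "finite F' \<and> F \<subseteq> F' \<and> F' \<subseteq> G"
    have "fle A a (phi F)" using F unfolding Ua_def by blast
    moreover have "fle A (phi F) (phi F')" using F' phi_mono by blast
    ultimately have "fle A a (phi F')" using trans[OF assms phi_car phi_car] by blast
    then show "F' \<in> Ua a" using F' unfolding Ua_def by blast
  qed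
qed

lemma Ua_anti: assumes "a \<in> fcar A" "b \<in> fcar A" "fle A b a" shows "Ua a \<subseteq> Ua b"
  unfolding Ua_def using trans[OF assms(2,1) phi_car] assms(3) by blast

lemma v_car: "v S \<in> fcar A"
  unfolding v_def by (rule sup_car[OF Xsub])

lemma v_mono: "S \<subseteq> S' \<Longrightarrow> fle A (v S) (v S')"
  unfolding v_def by (rule sup_mono[OF Xsub]) blast

lemma v_Union: "v (\<Union>T) = fsup A (v ` T)"
proof -
  have "{a \<in> fcar A. Ua a \<in> \<Union>T} = (\<Union>S\<in>T. {a \<in> fcar A. Ua a \<in> S})" by blast
  then show ?thesis unfolding v_def using sup_UN[of T "\<lambda>S. {a \<in> fcar A. Ua a \<in> S}"] by simp
qed

lemma v_Int: assumes S: "S \<in> scott_opens (free_frame G)" and S': "S' \<in> scott_opens (free_frame G)"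
  shows "v (S \<inter> S') = fmeet A (v S) (v S')"
proof (rule antisym')
  show "v (S \<inter> S') \<in> fcar A" by (rule v_car)
  show "fmeet A (v S) (v S') \<in> fcar A" by (rule meet_car[OF v_car v_car])
  show "fle A (v (S \<inter> S')) (fmeet A (v S) (v S'))"
    by (rule meet_greatest[OF v_car v_car v_car]) (auto intro: v_mono)
  let ?X = "\<lambda>S. {a \<in> fcar A. Ua a \<in> S}"
  have "fmeet A (v S) (v S') = fmeet A (v S') (v S)" by (rule meet_comm)
  also have "\<dots> = fsup A ((\<lambda>a. fmeet A (v S') a) ` ?X S)"
    unfolding v_def[of S] by (rule distrib[OF v_car Xsub])
  finally have eq: "fmeet A (v S) (v S') = fsup A ((\<lambda>a. fmeet A (v S') a) ` ?X S)" .
  have "fle A (fsup A ((\<lambda>a. fmeet A (v S') a) ` ?X S)) (v (S \<inter> S'))"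
  proof (rule sup_least)
    show "(\<lambda>a. fmeet A (v S') a) ` ?X S \<subseteq> fcar A" using meet_car[OF v_car] by blast
    show "v (S \<inter> S') \<in> fcar A" by (rule v_car)
    fix s assume "s \<in> (\<lambda>a. fmeet A (v S') a) ` ?X S"
    then obtain a where a: "a \<in> fcar A" "Ua a \<in> S" "s = fmeet A (v S') a" by blast
    have "s = fmeet A a (v S')" using a meet_comm by simp
    also have "\<dots> = fsup A ((\<lambda>b. fmeet A a b) ` ?X S')"
      unfolding v_def[of S'] by (rule distrib[OF a(1) Xsub])
    finally have s: "s = fsup A ((\<lambda>b. fmeet A a b) ` ?X S')" .
    show "fle A s (v (S \<inter> S'))" unfolding s
    proof (rule sup_least)
      show "(\<lambda>b. fmeet A a b) ` ?X S' \<subseteq> fcar A" using meet_car[OF a(1)] by blast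
      show "v (S \<inter> S') \<in> fcar A" by (rule v_car)
      fix t assume "t \<in> (\<lambda>b. fmeet A a b) ` ?X S'"
      then obtain b where b: "b \<in> fcar A" "Ua b \<in> S'" "t = fmeet A a b" by blast
      have tc: "t \<in> fcar A" using b meet_car[OF a(1)] by simp
      have "Ua a \<subseteq> Ua t" using Ua_anti[OF a(1) tc] meet_le1[OF a(1) b(1)] b(3) by simp
      then have "Ua t \<in> S" using soD2[OF S a(2) _, of "Ua t"] Ua_car[OF tc] by simp
      moreover have "Ua b \<subseteq> Ua t" using Ua_anti[OF b(1) tc] meet_le2[OF a(1) b(1)] b(3) by simp
      then have "Ua t \<in> S'" using soD2[OF S' b(2) _, of "Ua t"] Ua_car[OF tc] by simp
      ultimately have "t \<in> ?X (S \<inter> S')" using tc by blast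
      then show "fle A t (v (S \<inter> S'))" unfolding v_def by (rule sup_ub[OF Xsub])
    qed
  qed
  then show "fle A (fmeet A (v S) (v S')) (v (S \<inter> S'))" using eq by simp
qed

lemma v_top: "v (fcar (free_frame G)) = ftop A"
proof -
  have "{a \<in> fcar A. Ua a \<in> fcar (free_frame G)} = fcar A" using Ua_car by auto
  then show ?thesis unfolding v_def ftop_def by simp
qed

lemma v_hom: "frame_hom (scott_frame (free_frame G)) A v"
  unfolding frame_hom_def
proof (intro conjI ballI allI impI)
  show "\<And>a. a \<in> fcar (scott_frame (free_frame G)) \<Longrightarrow> v a \<in> fcar A" by (rule v_car)
  show "v (ftop (scott_frame (free_frame G))) = ftop A" using v_top by (simp add: scott_top)
  show "\<And>a b. a \<in> fcar (scott_frame (free_frame G)) \<Longrightarrow> b \<in> fcar (scott_frame (free_frame G)) \<Longrightarrow>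
     v (fmeet (scott_frame (free_frame G)) a b) = fmeet A (v a) (v b)"
    by (simp add: scott_fmeet v_Int)
  show "\<And>S. S \<subseteq> fcar (scott_frame (free_frame G)) \<Longrightarrow> v (fsup (scott_frame (free_frame G)) S) = fsup A (v ` S)"
    by (simp add: scott_fsup v_Union)
qed

end

context main begin

lemma key1: assumes "(S, W) \<in> ev G" shows "(v S, iX G R W) \<in> u"
proof -
  have S: "S \<in> scott_opens (free_frame G)" and W: "W \<in> car" and SW: "\<forall>V\<in>S. W \<subseteq> V"
    using assms unfolding ev_def by auto
  show ?thesis unfolding v_def
  proof (rule ciD4[OF u iX_car[OF W] Xsub], rule subsetI)
    fix p assume "p \<in> {a \<in> fcar A. Ua a \<in> S} \<times> {iX G R W}"
    then obtain a where a: "a \<in> fcar A" "Ua a \<in> S" "p = (a, iX G R W)" by blast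
    have "W \<subseteq> Ua a" using SW a(2) by blast
    have "(a, fsup OX (iX G R ` upF ` W)) \<in> u"
    proof (rule ciD3[OF u a(1)])
      show "iX G R ` upF ` W \<subseteq> fcar OX" using iX_car upF_car by blast
      show "{a} \<times> iX G R ` upF ` W \<subseteq> u"
      proof
        fix q assume "q \<in> {a} \<times> iX G R ` upF ` W"
        then obtain F where F: "F \<in> W" "q = (a, iX G R (upF F))" by blast
        then have "F \<in> Ua a" using \<open>W \<subseteq> Ua a\<close> by blast
        then have le: "fle A a (phi F)" unfolding Ua_def by blast
        show "q \<in> u" unfolding F(2)
          by (rule ciD2[OF u phi_in a(1) iX_car[OF upF_car] le OX_refl[OF upF_car]])
      qed
    qed
    then show "p \<in> u" using a(3) iX_W[OF W] by simp
  qed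
qed

lemma SF_so: "SF F \<in> scott_opens (free_frame G)"
  unfolding scott_opens_def
proof (intro CollectI conjI ballI allI impI)
  show "SF F \<subseteq> fcar (free_frame G)" unfolding SF_def by auto
next
  fix x y assume "x \<in> SF F" "y \<in> fcar (free_frame G)" "fle (free_frame G) x y"
  then show "y \<in> SF F" unfolding SF_def by auto
next
  fix D assume D: "D \<subseteq> fcar (free_frame G) \<and> directed_in (free_frame G) D \<and> fsup (free_frame G) D \<in> SF F"
  then have "F \<in> \<Union>D" using ff_fsup[of D G] unfolding SF_def by auto
  then obtain d where "d \<in> D" "F \<in> d" by blast
  then show "\<exists>d\<in>D. d \<in> SF F" using D unfolding SF_def by auto
qed

lemma SF_ev: "(SF F, upF F) \<in> ev G"
proof -
  have "\<forall>V\<in>SF F. upF F \<subseteq> V"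
  proof (intro ballI subsetI)
    fix V F' assume V: "V \<in> SF F" and F': "F' \<in> upF F"
    then have "V \<in> car" "F \<in> V" unfolding SF_def by auto
    moreover have "finite F' \<and> F \<subseteq> F' \<and> F' \<subseteq> G" using F' unfolding upF_def by blast
    ultimately show "F' \<in> V" unfolding ffcar_iff by blast
  qed
  then show ?thesis unfolding ev_def using SF_so upF_car by auto
qed

lemma v_SF: assumes "finite F" "F \<subseteq> G" shows "v (SF F) = phi F"
proof -
  have "{a \<in> fcar A. Ua a \<in> SF F} = {a \<in> fcar A. fle A a (phi F)}"
    using assms Ua_car unfolding SF_def Ua_def by auto
  moreover have "fsup A {a \<in> fcar A. fle A a (phi F)} = phi F"
  proof (rule antisym'[OF sup_car[OF Xsub] phi_car])
    show "fle A (fsup A {a \<in> fcar A. fle A a (phi F)}) (phi F)"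
      by (rule sup_least[OF Xsub phi_car]) blast
    show "fle A (phi F) (fsup A {a \<in> fcar A. fle A a (phi F)})"
      by (rule sup_ub[OF Xsub]) (use phi_car refl in blast)
  qed
  ultimately show ?thesis unfolding v_def by simp
qed

definition E :: "('g set set set \<times> 'g set set set) set" where
  "E = {(S, C). S \<in> scott_opens (free_frame G) \<and> C \<in> fcar OX \<and> (v S, C) \<in> u}"

lemma E_ideal: "is_Cideal (scott_frame (free_frame G)) OX E"
proof (rule ciI)
  show "E \<subseteq> fcar (scott_frame (free_frame G)) \<times> fcar OX" unfolding E_def by auto
next
  fix a b a' b' assume h: "(a, b) \<in> E" "a' \<in> fcar (scott_frame (free_frame G))" "b' \<in> fcar OX"
    "fle (scott_frame (free_frame G)) a' a" "fle OX b' b"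
  then have "(v a, b) \<in> u" "fle A (v a') (v a)" unfolding E_def using v_mono by auto
  then have "(v a', b') \<in> u" using ciD2[OF u _ v_car h(3) _ h(5)] by blast
  then show "(a', b') \<in> E" using h(2,3) unfolding E_def by auto
next
  fix a S assume h: "a \<in> fcar (scott_frame (free_frame G))" "S \<subseteq> fcar OX" "{a} \<times> S \<subseteq> E"
  have "{v a} \<times> S \<subseteq> u" using h(3) unfolding E_def by auto
  then have "(v a, fsup OX S) \<in> u" using ciD3[OF u v_car h(2)] by blast
  then show "(a, fsup OX S) \<in> E" using h(1) OX_fsup_car[OF h(2)] unfolding E_def by auto
next
  fix b S assume h: "b \<in> fcar OX" "S \<subseteq> fcar (scott_frame (free_frame G))" "S \<times> {b} \<subseteq> E"
  have S: "S \<subseteq> scott_opens (free_frame G)" using h(2) by simp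
  have "(v ` S) \<times> {b} \<subseteq> u" using h(3) unfolding E_def by auto
  moreover have "v ` S \<subseteq> fcar A" using v_car by blast
  ultimately have "(fsup A (v ` S), b) \<in> u" using ciD4[OF u h(1)] by blast
  then have "(v (\<Union>S), b) \<in> u" by (simp add: v_Union)
  then show "(fsup (scott_frame (free_frame G)) S, b) \<in> E"
    using h(1) so_Union[OF S] scott_fsup[OF S] unfolding E_def by auto
qed

lemma main_eq: "u = tensor_map A OX v id (ev_tilde G R)"
proof -
  let ?P0 = "(\<lambda>(a, b). (id a, iX G R b)) ` ev G"
  let ?ET = "Cideal_closure (scott_frame (free_frame G)) OX ?P0"
  have ET: "ev_tilde G R = ?ET" unfolding ev_tilde_def tensor_map_def by simp
  have P0E: "?P0 \<subseteq> E"
  proof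
    fix p assume "p \<in> ?P0"
    then obtain S W where SW: "(S, W) \<in> ev G" "p = (S, iX G R W)" by auto
    then have "S \<in> scott_opens (free_frame G)" "W \<in> car" unfolding ev_def by auto
    then show "p \<in> E" using key1[OF SW(1)] SW(2) iX_car unfolding E_def by auto
  qed
  have ETE: "?ET \<subseteq> E" by (rule cl_sub[OF E_ideal P0E])
  let ?Q = "(\<lambda>(a, b). (v a, id b)) ` ?ET"
  have tm: "tensor_map A OX v id (ev_tilde G R) = Cideal_closure A OX ?Q"
    unfolding ET tensor_map_def ..
  have Qu: "?Q \<subseteq> u" using ETE unfolding E_def by auto
  have Qcar: "?Q \<subseteq> fcar A \<times> fcar OX" using ETE v_car unfolding E_def by auto
  have full: "is_Cideal A OX (fcar A \<times> fcar OX)"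
    by (rule full_ideal) (auto intro: sup_car OX_fsup_car)
  have T: "is_Cideal A OX (Cideal_closure A OX ?Q)" by (rule cl_ideal[OF full Qcar])
  have "Cideal_closure A OX ?Q \<subseteq> u" by (rule cl_sub[OF u Qu])
  moreover have "u \<subseteq> Cideal_closure A OX ?Q"
  proof
    fix p assume p: "p \<in> u"
    then obtain a C where aC: "p = (a, C)" "a \<in> fcar A" "C \<in> fcar OX" using ciD1[OF u] by blast
    then obtain W where W: "W \<in> car" "C = iX G R W" using OX_elem by blast
    have "(a, fsup OX (iX G R ` upF ` W)) \<in> Cideal_closure A OX ?Q"
    proof (rule ciD3[OF T aC(2)])
      show "iX G R ` upF ` W \<subseteq> fcar OX" using iX_car upF_car by blast
      show "{a} \<times> iX G R ` upF ` W \<subseteq> Cideal_closure A OX ?Q"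
      proof
        fix q assume "q \<in> {a} \<times> iX G R ` upF ` W"
        then obtain F where F: "F \<in> W" "q = (a, iX G R (upF F))" by blast
        have FG: "finite F" "F \<subseteq> G" using F(1) W(1) unfolding ffcar_iff by auto
        have "(SF F, iX G R (upF F)) \<in> ?P0" using SF_ev by force
        then have "(SF F, iX G R (upF F)) \<in> ?ET" using cl_incl by blast
        then have "(v (SF F), iX G R (upF F)) \<in> ?Q" by force
        then have "(phi F, iX G R (upF F)) \<in> ?Q" using v_SF[OF FG] by simp
        then have inQ: "(phi F, iX G R (upF F)) \<in> Cideal_closure A OX ?Q"
          using cl_incl[of ?Q A OX] by blast
        have sub: "upF F \<subseteq> W" using W_decomp[OF W(1)] F(1) by blast
        have "(a, iX G R (upF F)) \<in> u"
          using ciD2[OF u p[unfolded aC(1)] aC(2) iX_car[OF upF_car] refl[OF aC(2)]]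
            OX_mono[OF upF_car W(1) sub] W(2) by blast
        then have le: "fle A a (phi F)" by (rule phi_ge[OF aC(2)])
        show "q \<in> Cideal_closure A OX ?Q" unfolding F(2)
          by (rule ciD2[OF T inQ aC(2) iX_car[OF upF_car] le OX_refl[OF upF_car]])
      qed
    qed
    then show "p \<in> Cideal_closure A OX ?Q" using iX_W[OF W(1)] W(2) aC(1) by simp
  qed
  ultimately show ?thesis using tm by simp
qed

end

theorem proposition3p1:
  fixes G :: "'g set"
    and R :: "('g set set \<times> 'g set set) set"
    and A :: "'a frm"
    and u :: "('a \<times> 'g set set set) set"
  assumes "R \<subseteq> free_frame_car G \<times> free_frame_car G"
    and "is_frame A"
    and "u \<in> fcar (tensor A (pres_frame G R))"
  shows "\<exists>v. frame_hom (scott_frame (free_frame G)) A v \<and>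
             u = tensor_map A (pres_frame G R) v id (ev_tilde G R)"
proof -
  interpret main G R A u
    using assms by unfold_locales (simp_all add: tensor_def)
  show ?thesis using v_hom main_eq by blast
qed

end
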